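(* Let $f=f(u)$ be smooth and suppose $\Sigma=\{u\in\mathbb{R}: f(u)=u\}$ is nonempty and finite, with smallest element $u_1^*$ and largest element $u_N^*$, and assume $f'(u_1^* )<1$ and $f'(u_N^* )<1$. Let $(\rho,u)$ be a classical solution of $(S_f)$ on $[0,T)$ with $\rho\ge0$. Then for all $t\in[0,T)$ and $x\in\mathbb{R}$, $$\min\{\inf u_0,u_1^*\}\le u(t,x)\le\max\{\sup u_0,u_N^*\}.$$ In particular, if $\Sigma=\{u^*\}$ with $f'(u^* )<1$, then $\min\{\inf u_0,u^*\}\le u(t,x)\le\max\{\sup u_0,u^*\}$.
   Context: When $f$ depends on $u$ only, system $(S_f)$ is: $\rho_t+(\rho f(u))_x=0$, $u_t+uu_x=\rho\,(f(u)-u)$ for $x\in\mathbb{R}$, $t>0$, with $\rho(0,x)=\rho_0(x)\ge0$, $u(0,x)=u_0(x)$, where $u_0$ is bounded. A classical solution on $[0,T)$ is a pair $\rho,u\in C^1([0,T)\times\mathbb{R})$ satisfying the equations pointwise and the initial data, such that $\rho,u,\rho_x,u_x$ are bounded on $[0,t]\times\mathbb{R}$ for every $t<T$. *)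

theory Defs
  imports "HOL-Analysis.Analysis"
begin

definition smooth_real :: "(real \<Rightarrow> real) \<Rightarrow> bool" where
  "smooth_real f \<longleftrightarrow> (\<forall>n x. ((deriv ^^ n) f) differentiable (at x))"

definition C1_strip ::
  "real \<Rightarrow> (real \<Rightarrow> real \<Rightarrow> real) \<Rightarrow> (real \<Rightarrow> real \<Rightarrow> real) \<Rightarrow> (real \<Rightarrow> real \<Rightarrow> real) \<Rightarrow> bool" where
  "C1_strip T w wt wx \<longleftrightarrow>
     continuous_on ({0..<T} \<times> UNIV) (\<lambda>p. w (fst p) (snd p)) \<and>
     continuous_on ({0..<T} \<times> UNIV) (\<lambda>p. wt (fst p) (snd p)) \<and>
     continuous_on ({0..<T} \<times> UNIV) (\<lambda>p. wx (fst p) (snd p)) \<and>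
     (\<forall>t x. 0 \<le> t \<and> t < T \<longrightarrow>
        ((\<lambda>p. w (fst p) (snd p)) has_derivative (\<lambda>h. fst h * wt t x + snd h * wx t x))
          (at (t, x) within {0..<T} \<times> UNIV))"

text \<open>Classical solution of (S_f) on [0,T):
  rho_t + (rho f(u))_x = 0,  u_t + u u_x = rho (f(u) - u),  with initial data.\<close>
definition classical_solution ::
  "(real \<Rightarrow> real) \<Rightarrow> real \<Rightarrow> (real \<Rightarrow> real) \<Rightarrow> (real \<Rightarrow> real) \<Rightarrow>
   (real \<Rightarrow> real \<Rightarrow> real) \<Rightarrow> (real \<Rightarrow> real \<Rightarrow> real) \<Rightarrow> bool" where
  "classical_solution f T rho0 u0 rho u \<longleftrightarrow>
     (\<exists>rt rx ut ux.
        C1_strip T rho rt rx \<and> C1_strip T u ut ux \<and>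
        (\<forall>t x. 0 \<le> t \<and> t < T \<longrightarrow>
           ((\<lambda>y. rho t y * f (u t y)) has_real_derivative (- rt t x)) (at x) \<and>
           ut t x + u t x * ux t x = rho t x * (f (u t x) - u t x)) \<and>
        (\<forall>x. rho 0 x = rho0 x \<and> u 0 x = u0 x) \<and>
        (\<forall>s. 0 \<le> s \<and> s < T \<longrightarrow>
           bounded ((\<lambda>p. rho (fst p) (snd p)) ` ({0..s} \<times> UNIV)) \<and>
           bounded ((\<lambda>p. u (fst p) (snd p)) ` ({0..s} \<times> UNIV)) \<and>
           bounded ((\<lambda>p. rx (fst p) (snd p)) ` ({0..s} \<times> UNIV)) \<and>
           bounded ((\<lambda>p. ux (fst p) (snd p)) ` ({0..s} \<times> UNIV))))"

end

theory Submission
  imports Defs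
begin

lemma right_neg:
  fixes g :: "real \<Rightarrow> real"
  assumes cont: "continuous_on UNIV g" and der: "(g has_real_derivative D) (at a)"
    and D: "D < 0" and ga: "g a = 0" and nz: "\<forall>v>a. g v \<noteq> 0" and w: "w > a"
  shows "g w < 0"
proof -
  have "((\<lambda>y. (g y - g a) / (y - a)) \<longlongrightarrow> D) (at a)"
    using der has_field_derivative_iff by blast
  hence "((\<lambda>y. (g y - g a) / (y - a)) \<longlongrightarrow> D) (at_right a)"
    by (rule tendsto_mono[rotated]) (simp add: at_le)
  hence "eventually (\<lambda>y. (g y - g a) / (y - a) < 0) (at_right a)"
    using D order_tendstoD(2) by blast
  moreover have "eventually (\<lambda>y. y > a) (at_right a)" by (simp add: eventually_at_right_less)
  ultimately have "eventually (\<lambda>y. g y < 0) (at_right a)"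
    by eventually_elim (use ga in \<open>auto simp: divide_less_0_iff\<close>)
  then obtain b where b: "b > a" "\<And>y. y > a \<Longrightarrow> y < b \<Longrightarrow> g y < 0"
    unfolding eventually_at_right_field by blast
  show ?thesis
  proof (rule ccontr)
    assume "\<not> g w < 0"
    define y where "y = (a + min w b) / 2"
    have y: "a < y" "y < b" "y \<le> w" using b w by (auto simp: y_def)
    have "g y < 0" using b y by auto
    then obtain x where "y \<le> x" "x \<le> w" "g x = 0"
      using IVT'[of g y 0 w] \<open>\<not> g w < 0\<close> y continuous_on_subset[OF cont] by force
    thus False using nz y by auto
  qed
qed

lemma left_pos:
  fixes g :: "real \<Rightarrow> real"
  assumes cont: "continuous_on UNIV g" and der: "(g has_real_derivative D) (at a)"
    and D: "D < 0" and ga: "g a = 0" and nz: "\<forall>v<a. g v \<noteq> 0" and w: "w < a"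
  shows "g w > 0"
proof -
  have "((\<lambda>y. (g y - g a) / (y - a)) \<longlongrightarrow> D) (at a)"
    using der has_field_derivative_iff by blast
  hence "((\<lambda>y. (g y - g a) / (y - a)) \<longlongrightarrow> D) (at_left a)"
    by (rule tendsto_mono[rotated]) (simp add: at_le)
  hence "eventually (\<lambda>y. (g y - g a) / (y - a) < 0) (at_left a)"
    using D order_tendstoD(2) by blast
  moreover have "eventually (\<lambda>y. y < a) (at_left a)" by (auto simp: eventually_at_filter)
  ultimately have "eventually (\<lambda>y. g y > 0) (at_left a)"
    by eventually_elim (use ga in \<open>auto simp: divide_less_0_iff\<close>)
  then obtain b where b: "b < a" "\<And>y. y > b \<Longrightarrow> y < a \<Longrightarrow> g y > 0"
    unfolding eventually_at_left_field by blast
  show ?thesis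
  proof (rule ccontr)
    assume "\<not> g w > 0"
    define y where "y = (a + max w b) / 2"
    have y: "y < a" "b < y" "w \<le> y" using b w by (auto simp: y_def)
    have "g y > 0" using b y by auto
    then obtain x where "w \<le> x" "x \<le> y" "g x = 0"
      using IVT'[of g w 0 y] \<open>\<not> g w > 0\<close> y continuous_on_subset[OF cont] by force
    thus False using nz y by auto
  qed
qed

lemma onesided:
  fixes g :: "real \<Rightarrow> real"
  assumes der: "(g has_real_derivative D) (at 0 within {0..\<eta>})" and eta: "\<eta> > 0"
    and le: "\<forall>s\<in>{0<..\<eta>}. g s \<le> g 0"
  shows "D \<le> 0"
proof -
  have "((\<lambda>y. (g y - g 0) / (y - 0)) \<longlongrightarrow> D) (at_right 0)"
    using der has_field_derivative_iff at_within_Icc_at_right[OF eta] by metis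
  moreover have "eventually (\<lambda>y. (g y - g 0) / (y - 0) \<le> 0) (at_right 0)"
  proof -
    have "eventually (\<lambda>y. y > 0 \<and> y < \<eta>) (at_right (0::real))"
      using eta unfolding eventually_at_right_field by blast
    thus ?thesis by eventually_elim (use le in \<open>auto simp: divide_le_0_iff\<close>)
  qed
  ultimately show ?thesis using tendsto_upperbound by (metis trivial_limit_at_right_real)
qed


lemma maxp:
  fixes u ut ux :: "real \<Rightarrow> real \<Rightarrow> real" and M T t0 x0 :: real
  assumes C1: "C1_strip T u ut ux"
    and bdd: "\<forall>s. 0 \<le> s \<and> s < T \<longrightarrow> bounded ((\<lambda>p. u (fst p) (snd p)) ` ({0..s} \<times> UNIV))"
    and init: "\<forall>x. u 0 x \<le> M"
    and sign: "\<forall>t x. 0 \<le> t \<and> t < T \<and> u t x > M \<longrightarrow> ut t x + u t x * ux t x \<le> 0"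
    and t0: "0 \<le> t0" "t0 < T"
  shows "u t0 x0 \<le> M"
proof (rule ccontr)
  assume "\<not> u t0 x0 \<le> M"
  define a where "a = u t0 x0 - M"
  have a: "a > 0" using \<open>\<not> u t0 x0 \<le> M\<close> a_def by simp
  obtain K0 where K0: "\<forall>y\<in>(\<lambda>p. u (fst p) (snd p)) ` ({0..t0} \<times> UNIV). norm y \<le> K0"
    using bdd t0 unfolding bounded_iff by blast
  define K where "K = \<bar>K0\<bar> + 1"
  have K1: "K > 0" by (simp add: K_def add_nonneg_pos)
  have K2: "\<bar>u t x\<bar> \<le> K" if "0 \<le> t" "t \<le> t0" for t x
  proof -
    have "(t, x) \<in> {0..t0} \<times> UNIV" using that by simp
    hence "norm (u t x) \<le> K0" using K0 by force
    thus ?thesis by (simp add: K_def)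
  qed
  note K = K1 K2
  define \<epsilon> where "\<epsilon> = a / (2 * (t0 + 1))"
  have eps: "\<epsilon> > 0" "\<epsilon> * t0 < a / 2"
    using a t0 by (auto simp: \<epsilon>_def field_simps)
  define s0 where "s0 = sqrt (1 + x0\<^sup>2)"
  have s0: "s0 \<ge> 1" unfolding s0_def by simp
  define \<delta> where "\<delta> = min (\<epsilon> / (2 * K)) (a / (4 * s0))"
  have del: "\<delta> > 0" "K * \<delta> \<le> \<epsilon> / 2" "\<delta> * s0 \<le> a / 4"
    using eps K a s0 by (auto simp: \<delta>_def field_simps min_def)
  define V where "V = (\<lambda>p. u (fst p) (snd p) - \<delta> * sqrt (1 + (snd p)\<^sup>2) - \<epsilon> * fst p)"
  have V0: "V (t0, x0) > M"
    using eps del a unfolding V_def a_def s0_def by simp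
  define R where "R = \<bar>x0\<bar> + (\<bar>K - M\<bar> + 1) / \<delta> + 1"
  have R1: "R > \<bar>x0\<bar>" using del by (simp add: R_def add_nonneg_pos)
  have "\<delta> * R = \<delta> * \<bar>x0\<bar> + (\<bar>K - M\<bar> + 1) + \<delta>"
    using del by (simp add: R_def field_simps)
  hence R2: "\<delta> * R \<ge> K - M + 1" using del by (smt (verit) mult_nonneg_nonneg abs_ge_zero)
  note R = R1 R2
  have sq: "\<bar>x\<bar> \<le> sqrt (1 + x\<^sup>2)" for x :: real
  proof -
    have "sqrt (x\<^sup>2) \<le> sqrt (1 + x\<^sup>2)" by (rule real_sqrt_le_mono) simp
    thus ?thesis by simp
  qed
  have far: "V (t, x) < M" if "0 \<le> t" "t \<le> t0" "\<bar>x\<bar> \<ge> R" for t x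
  proof -
    have "\<delta> * R \<le> \<delta> * sqrt (1 + x\<^sup>2)"
      using sq[of x] that del by (intro mult_left_mono) auto
    moreover have "\<epsilon> * t \<ge> 0" using eps that by simp
    ultimately show ?thesis using K(2)[OF that(1,2), of x] R(2) unfolding V_def
      by (smt (verit) fst_conv snd_conv)
  qed
  define B where "B = {0..t0} \<times> {-R..R}"
  have BS: "B \<subseteq> {0..<T} \<times> UNIV" using t0 by (auto simp: B_def)
  have contu: "continuous_on ({0..<T} \<times> UNIV) (\<lambda>p. u (fst p) (snd p))"
    using C1 unfolding C1_strip_def by blast
  have contV: "continuous_on B V"
    unfolding V_def
    by (intro continuous_intros continuous_on_subset[OF contu BS])
  have "compact B" unfolding B_def by (intro compact_Times compact_Icc)
  moreover have "(t0, x0) \<in> B" using t0 R by (auto simp: B_def)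
  ultimately obtain p1 where p1: "p1 \<in> B" "\<And>q. q \<in> B \<Longrightarrow> V q \<le> V p1"
    using continuous_attains_sup[OF _ _ contV] by blast
  obtain t1 x1 where p1e: "p1 = (t1, x1)" by (cases p1)
  have t1: "0 \<le> t1" "t1 \<le> t0" "\<bar>x1\<bar> \<le> R" using p1 p1e by (auto simp: B_def)
  have Vp1: "V p1 > M" using p1(2)[OF \<open>(t0, x0) \<in> B\<close>] V0 by simp
  have x1: "\<bar>x1\<bar> < R" using far[of t1 x1] t1 Vp1 p1e by force
  have t1pos: "t1 > 0"
  proof (rule ccontr)
    assume "\<not> t1 > 0"
    hence "t1 = 0" using t1 by simp
    hence "V p1 \<le> u 0 x1" using del unfolding p1e V_def by simp
    thus False using init Vp1 by (meson not_le order_trans)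
  qed
  define c where "c = u t1 x1"
  have cM: "c > M"
  proof -
    have "V p1 \<le> c"
    proof -
      have "\<delta> * sqrt (1 + x1\<^sup>2) \<ge> 0" "\<epsilon> * t1 \<ge> 0" using del eps t1 by auto
      thus ?thesis unfolding p1e V_def c_def by simp
    qed
    thus ?thesis using Vp1 by simp
  qed
  have cK: "\<bar>c\<bar> \<le> K" using K(2) t1 c_def by simp
  have sgn: "ut t1 x1 + c * ux t1 x1 \<le> 0" using sign t1 t0 cM c_def by simp
  define q where "q = x1 / sqrt (1 + x1\<^sup>2)"
  have q: "\<bar>q\<bar> \<le> 1"
  proof -
    have p: "sqrt (1 + x1\<^sup>2) > 0" by (simp add: add_pos_nonneg)
    thus ?thesis using sq[of x1] unfolding q_def by (simp add: abs_divide divide_le_eq_1_pos)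
  qed
  define D where "D = \<epsilon> - (ut t1 x1 + c * ux t1 x1) + c * \<delta> * q"
  have "\<bar>c * \<delta> * q\<bar> \<le> K * \<delta>"
  proof -
    have "\<bar>c * \<delta> * q\<bar> = \<bar>c\<bar> * \<delta> * \<bar>q\<bar>" using del by (simp add: abs_mult)
    also have "\<dots> \<le> K * \<delta> * 1" using cK q del
      by (intro mult_mono) auto
    finally show ?thesis by simp
  qed
  hence Dpos: "D > 0" using del eps sgn unfolding D_def by linarith
  define \<eta> where "\<eta> = min t1 ((R - \<bar>x1\<bar>) / (\<bar>c\<bar> + 1))"
  have eta: "\<eta> > 0" using t1pos x1 by (simp add: \<eta>_def)
  define \<gamma> where "\<gamma> = (\<lambda>s::real. (t1 - s, x1 - s * c))"
  have gB: "\<gamma> s \<in> B" if "0 \<le> s" "s \<le> \<eta>" for s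
  proof -
    have "s \<le> (R - \<bar>x1\<bar>) / (\<bar>c\<bar> + 1)" using that by (simp add: \<eta>_def)
    hence "s * (\<bar>c\<bar> + 1) \<le> R - \<bar>x1\<bar>" by (simp add: field_simps)
    moreover have "\<bar>s * c\<bar> \<le> s * (\<bar>c\<bar> + 1)" using that by (simp add: abs_mult algebra_simps)
    ultimately have "\<bar>x1 - s * c\<bar> \<le> R" by linarith
    moreover have "s \<le> t1" using that by (simp add: \<eta>_def)
    ultimately show ?thesis using that t1 by (auto simp: B_def \<gamma>_def)
  qed
  have derV: "(V has_derivative (\<lambda>h. fst h * (ut t1 x1 - \<epsilon>) + snd h * (ux t1 x1 - \<delta> * q)))
      (at p1 within {0..<T} \<times> UNIV)"
  proof -
    have du: "((\<lambda>p. u (fst p) (snd p)) has_derivative (\<lambda>h. fst h * ut t1 x1 + snd h * ux t1 x1))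
      (at (t1, x1) within {0..<T} \<times> UNIV)"
      using C1 t1 t0 unfolding C1_strip_def by simp
    have sqd: "((\<lambda>p::real\<times>real. sqrt (1 + (snd p)\<^sup>2)) has_derivative
       (\<lambda>h. (inverse (sqrt (1 + x1\<^sup>2)) / 2) * (2 * x1 * snd h))) (at (t1, x1) within {0..<T} \<times> UNIV)"
      by (rule derivative_eq_intros refl | simp add: add_pos_nonneg)+ (auto simp: fun_eq_iff)
    have "(V has_derivative (\<lambda>h. (fst h * ut t1 x1 + snd h * ux t1 x1)
        - \<delta> * ((inverse (sqrt (1 + x1\<^sup>2)) / 2) * (2 * x1 * snd h)) - \<epsilon> * fst h))
      (at (t1, x1) within {0..<T} \<times> UNIV)"
      unfolding V_def
      by (rule has_derivative_diff[OF has_derivative_diff[OF du has_derivative_mult_right[OF sqd]]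
            has_derivative_mult_right[OF has_derivative_fst[OF has_derivative_ident]]])
    moreover have "(\<lambda>h. (fst h * ut t1 x1 + snd h * ux t1 x1)
        - \<delta> * ((inverse (sqrt (1 + x1\<^sup>2)) / 2) * (2 * x1 * snd h)) - \<epsilon> * fst h)
      = (\<lambda>h. fst h * (ut t1 x1 - \<epsilon>) + snd h * (ux t1 x1 - \<delta> * q))"
      by (rule ext) (simp add: q_def field_simps)
    ultimately show ?thesis using p1e by simp
  qed
  have dg: "(\<gamma> has_derivative (\<lambda>h. (- h, - h * c))) (at 0 within {0..\<eta>})"
    unfolding \<gamma>_def
    by (rule has_derivative_eq_rhs, (rule derivative_intros)+) (auto simp: fun_eq_iff)
  have img: "\<gamma> ` {0..\<eta>} \<subseteq> {0..<T} \<times> UNIV" 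
  proof (rule image_subsetI)
    fix s assume "s \<in> {0..\<eta>}"
    hence "\<gamma> s \<in> B" using gB by simp
    thus "\<gamma> s \<in> {0..<T} \<times> UNIV" using BS by blast
  qed
  have g0: "\<gamma> 0 = p1" using p1e by (simp add: \<gamma>_def)
  have derV2: "(V has_derivative (\<lambda>h. fst h * (ut t1 x1 - \<epsilon>) + snd h * (ux t1 x1 - \<delta> * q)))
      (at (\<gamma> 0) within \<gamma> ` {0..\<eta>})"
    unfolding g0 by (rule has_derivative_subset[OF derV img])
  have comp: "((V \<circ> \<gamma>) has_derivative
      ((\<lambda>h. fst h * (ut t1 x1 - \<epsilon>) + snd h * (ux t1 x1 - \<delta> * q)) \<circ> (\<lambda>h. (- h, - h * c))))
      (at 0 within {0..\<eta>})"
    by (rule diff_chain_within[OF dg derV2])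
  have "((\<lambda>h. fst h * (ut t1 x1 - \<epsilon>) + snd h * (ux t1 x1 - \<delta> * q)) \<circ> (\<lambda>h. (- h, - h * c)))
     = (\<lambda>h. D * h)"
    by (rule ext) (simp add: D_def algebra_simps)
  hence "((V \<circ> \<gamma>) has_real_derivative D) (at 0 within {0..\<eta>})"
    using comp by (simp add: has_field_derivative_def)
  moreover have "\<forall>s\<in>{0<..\<eta>}. (V \<circ> \<gamma>) s \<le> (V \<circ> \<gamma>) 0"
  proof
    fix s assume "s \<in> {0<..\<eta>}"
    hence "\<gamma> s \<in> B" using gB by simp
    thus "(V \<circ> \<gamma>) s \<le> (V \<circ> \<gamma>) 0" using p1(2)[OF \<open>\<gamma> s \<in> B\<close>] g0 by simp
  qed
  ultimately have "D \<le> 0" using onesided eta by blast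
  thus False using Dpos by simp
qed

lemma C1_refl:
  assumes "C1_strip T u ut ux"
  shows "C1_strip T (\<lambda>t x. - u t (- x)) (\<lambda>t x. - ut t (- x)) (\<lambda>t x. ux t (- x))"
proof -
  define r where "r = (\<lambda>p::real\<times>real. (fst p, - snd p))"
  have rS: "r ` ({0..<T} \<times> UNIV) \<subseteq> {0..<T} \<times> UNIV" by (auto simp: r_def)
  have rc: "continuous_on ({0..<T} \<times> UNIV) r" unfolding r_def by (intro continuous_intros)
  have dr: "(r has_derivative (\<lambda>h. (fst h, - snd h))) (at p within S)" for p S
    unfolding r_def
    by (rule has_derivative_eq_rhs, (rule derivative_intros)+) (auto simp: fun_eq_iff)
  have cc: "continuous_on ({0..<T} \<times> UNIV) (\<lambda>p. w (fst p) (snd p)) \<Longrightarrow>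
      continuous_on ({0..<T} \<times> UNIV) (\<lambda>p. w (fst p) (- snd p))" for w :: "real \<Rightarrow> real \<Rightarrow> real"
  proof -
    assume "continuous_on ({0..<T} \<times> UNIV) (\<lambda>p. w (fst p) (snd p))"
    from continuous_on_compose[OF rc continuous_on_subset[OF this rS]]
    show ?thesis by (simp add: r_def o_def)
  qed
  have h: "((\<lambda>p. - u (fst p) (- snd p)) has_derivative (\<lambda>h. fst h * - ut t (- x) + snd h * ux t (- x)))
          (at (t, x) within {0..<T} \<times> UNIV)" if "0 \<le> t" "t < T" for t x
  proof -
    have "((\<lambda>p. u (fst p) (snd p)) has_derivative (\<lambda>h. fst h * ut t (- x) + snd h * ux t (- x)))
          (at (t, - x) within {0..<T} \<times> UNIV)" using assms that unfolding C1_strip_def by blast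
    hence "((\<lambda>p. u (fst p) (snd p)) has_derivative (\<lambda>h. fst h * ut t (- x) + snd h * ux t (- x)))
          (at (r (t, x)) within r ` ({0..<T} \<times> UNIV))"
      using has_derivative_subset[OF _ rS] by (simp add: r_def)
    from diff_chain_within[OF dr this]
    have "(((\<lambda>p. u (fst p) (snd p)) \<circ> r) has_derivative
       ((\<lambda>h. fst h * ut t (- x) + snd h * ux t (- x)) \<circ> (\<lambda>h. (fst h, - snd h))))
       (at (t, x) within {0..<T} \<times> UNIV)" .
    note X = has_derivative_minus[OF this]
    have e1: "(\<lambda>y. - ((\<lambda>p. u (fst p) (snd p)) \<circ> r) y) = (\<lambda>p. - u (fst p) (- snd p))"
      by (simp add: fun_eq_iff r_def)
    have e2: "(\<lambda>xa. - ((\<lambda>h. fst h * ut t (- x) + snd h * ux t (- x)) \<circ> (\<lambda>h. (fst h, - snd h))) xa)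
      = (\<lambda>h. fst h * - ut t (- x) + snd h * ux t (- x))"
      by (simp add: fun_eq_iff)
    show ?thesis using X unfolding e1 e2 .
  qed
  have c: "continuous_on ({0..<T} \<times> UNIV) (\<lambda>p. u (fst p) (snd p))"
     "continuous_on ({0..<T} \<times> UNIV) (\<lambda>p. ut (fst p) (snd p))"
     "continuous_on ({0..<T} \<times> UNIV) (\<lambda>p. ux (fst p) (snd p))"
    using assms unfolding C1_strip_def by blast+
  show ?thesis unfolding C1_strip_def
    using continuous_on_minus[OF cc[OF c(1)]] continuous_on_minus[OF cc[OF c(2)]] cc[OF c(3)] h
    by blast
qed

lemma bdd_refl:
  fixes u :: "real \<Rightarrow> real \<Rightarrow> real"
  assumes "bounded ((\<lambda>p. u (fst p) (snd p)) ` ({0..s} \<times> UNIV))"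
  shows "bounded ((\<lambda>p. - u (fst p) (- snd p)) ` ({0..s} \<times> UNIV))"
proof -
  obtain K where K: "\<forall>y\<in>(\<lambda>p. u (fst p) (snd p)) ` ({0..s} \<times> UNIV). norm y \<le> K"
    using assms bounded_iff by metis
  have "norm (- u t (- x)) \<le> K" if "t \<in> {0..s}" for t x
  proof -
    have "(t, - x) \<in> {0..s} \<times> UNIV" using that by simp
    thus ?thesis using K by force
  qed
  hence "\<forall>y\<in>(\<lambda>p. - u (fst p) (- snd p)) ` ({0..s} \<times> UNIV). norm y \<le> K" by auto
  thus ?thesis unfolding bounded_iff by blast
qed

theorem mainTheorem5:
  fixes f :: "real \<Rightarrow> real" and T :: real
    and rho0 u0 :: "real \<Rightarrow> real" and rho u :: "real \<Rightarrow> real \<Rightarrow> real"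
  assumes smooth: "smooth_real f"
    and fin: "finite {v. f v = v}" and ne: "{v. f v = v} \<noteq> {}"
    and d1: "deriv f (Min {v. f v = v}) < 1"
    and dN: "deriv f (Max {v. f v = v}) < 1"
    and rho0_nonneg: "\<forall>x. rho0 x \<ge> 0"
    and u0_bdd: "bounded (range u0)"
    and sol: "classical_solution f T rho0 u0 rho u"
    and rho_nonneg: "\<forall>t x. 0 \<le> t \<and> t < T \<longrightarrow> rho t x \<ge> 0"
  shows "(\<forall>t x. 0 \<le> t \<and> t < T \<longrightarrow>
            min (Inf (range u0)) (Min {v. f v = v}) \<le> u t x \<and>
            u t x \<le> max (Sup (range u0)) (Max {v. f v = v})) \<and>
         (\<forall>us. {v. f v = v} = {us} \<and> deriv f us < 1 \<longrightarrow>
           (\<forall>t x. 0 \<le> t \<and> t < T \<longrightarrow>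
              min (Inf (range u0)) us \<le> u t x \<and> u t x \<le> max (Sup (range u0)) us))"
proof -
  define \<Sigma> where "\<Sigma> = {v. f v = v}"
  define uN where "uN = Max \<Sigma>"
  define u1 where "u1 = Min \<Sigma>"
  have fin': "finite \<Sigma>" and ne': "\<Sigma> \<noteq> {}" using fin ne by (simp_all add: \<Sigma>_def)
  have uN: "f uN = uN" "\<And>v. f v = v \<Longrightarrow> v \<le> uN"
    using Max_in[OF fin' ne'] Max_ge[OF fin'] by (auto simp: uN_def \<Sigma>_def)
  have u1: "f u1 = u1" "\<And>v. f v = v \<Longrightarrow> u1 \<le> v"
    using Min_in[OF fin' ne'] Min_le[OF fin'] by (auto simp: u1_def \<Sigma>_def)
  have fdiff: "f differentiable at x" for x
  proof -
    have "((deriv ^^ 0) f) differentiable (at x)" using smooth unfolding smooth_real_def by blast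
    thus ?thesis by simp
  qed
  have fcont: "continuous_on UNIV (\<lambda>v. f v - v)"
  proof -
    have "continuous_on UNIV f"
      by (rule continuous_at_imp_continuous_on, rule ballI, rule differentiable_imp_continuous_within, rule fdiff)
    thus ?thesis by (intro continuous_on_diff continuous_on_id)
  qed
  have gder: "((\<lambda>v. f v - v) has_real_derivative (deriv f a - 1)) (at a)" for a
  proof -
    have "(f has_real_derivative deriv f a) (at a)" using fdiff[of a] DERIV_deriv_iff_real_differentiable by blast
    thus ?thesis by (intro DERIV_diff DERIV_ident)
  qed
  have dN': "deriv f uN - 1 < 0" using dN unfolding uN_def \<Sigma>_def by simp
  have d1': "deriv f u1 - 1 < 0" using d1 unfolding u1_def \<Sigma>_def by simp
  have above: "f v < v" if "v > uN" for v
  proof -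
    have "\<forall>w>uN. f w - w \<noteq> 0" using uN(2) by force
    hence "f v - v < 0" using right_neg[OF fcont gder dN' _ _ that] uN(1) by simp
    thus ?thesis by simp
  qed
  have below: "f v > v" if "v < u1" for v
  proof -
    have "\<forall>w<u1. f w - w \<noteq> 0" using u1(2) by force
    hence "f v - v > 0" using left_pos[OF fcont gder d1' _ _ that] u1(1) by simp
    thus ?thesis by simp
  qed
  from sol obtain rt rx ut ux where A:
        "C1_strip T rho rt rx \<and> C1_strip T u ut ux \<and>
        (\<forall>t x. 0 \<le> t \<and> t < T \<longrightarrow>
           ((\<lambda>y. rho t y * f (u t y)) has_real_derivative (- rt t x)) (at x) \<and>
           ut t x + u t x * ux t x = rho t x * (f (u t x) - u t x)) \<and>
        (\<forall>x. rho 0 x = rho0 x \<and> u 0 x = u0 x) \<and>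
        (\<forall>s. 0 \<le> s \<and> s < T \<longrightarrow>
           bounded ((\<lambda>p. rho (fst p) (snd p)) ` ({0..s} \<times> UNIV)) \<and>
           bounded ((\<lambda>p. u (fst p) (snd p)) ` ({0..s} \<times> UNIV)) \<and>
           bounded ((\<lambda>p. rx (fst p) (snd p)) ` ({0..s} \<times> UNIV)) \<and>
           bounded ((\<lambda>p. ux (fst p) (snd p)) ` ({0..s} \<times> UNIV)))"
    unfolding classical_solution_def by blast
  have C1u: "C1_strip T u ut ux" using A by blast
  have eq: "\<forall>t x. 0 \<le> t \<and> t < T \<longrightarrow> ut t x + u t x * ux t x = rho t x * (f (u t x) - u t x)"
    using A by blast
  have ini: "\<forall>x. u 0 x = u0 x" using A by blast
  have bd: "\<forall>s. 0 \<le> s \<and> s < T \<longrightarrow> bounded ((\<lambda>p. u (fst p) (snd p)) ` ({0..s} \<times> UNIV))"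
    using A by blast
  have u0S: "u0 x \<le> Sup (range u0)" for x
    using u0_bdd by (intro cSup_upper) (auto intro: bounded_imp_bdd_above)
  have u0I: "Inf (range u0) \<le> u0 x" for x
    using u0_bdd by (intro cInf_lower) (auto intro: bounded_imp_bdd_below)
  have up: "u t x \<le> max (Sup (range u0)) uN" if "0 \<le> t" "t < T" for t x
  proof (rule maxp[OF C1u bd _ _ that])
    show "\<forall>x. u 0 x \<le> max (Sup (range u0)) uN" using ini u0S by (metis max.coboundedI1)
    show "\<forall>t x. 0 \<le> t \<and> t < T \<and> max (Sup (range u0)) uN < u t x \<longrightarrow> ut t x + u t x * ux t x \<le> 0"
    proof (intro allI impI)
      fix t x assume h: "0 \<le> t \<and> t < T \<and> max (Sup (range u0)) uN < u t x"
      hence "f (u t x) - u t x < 0" using above by simp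
      moreover have "rho t x \<ge> 0" using rho_nonneg h by blast
      ultimately show "ut t x + u t x * ux t x \<le> 0" using eq h
        by (simp add: mult_nonneg_nonpos)
    qed
  qed
  have lo: "min (Inf (range u0)) u1 \<le> u t x" if "0 \<le> t" "t < T" for t x
  proof -
    have "- u t (- (- x)) \<le> - min (Inf (range u0)) u1"
    proof (rule maxp[OF C1_refl[OF C1u] _ _ _ that])
      show "\<forall>s. 0 \<le> s \<and> s < T \<longrightarrow> bounded ((\<lambda>p. - u (fst p) (- snd p)) ` ({0..s} \<times> UNIV))"
        using bd bdd_refl by blast
      show "\<forall>x. - u 0 (- x) \<le> - min (Inf (range u0)) u1" using ini u0I by (simp add: min.coboundedI1)
      show "\<forall>t x. 0 \<le> t \<and> t < T \<and> - min (Inf (range u0)) u1 < - u t (- x) \<longrightarrow>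
          - ut t (- x) + - u t (- x) * ux t (- x) \<le> 0"
      proof (intro allI impI)
        fix t x assume h: "0 \<le> t \<and> t < T \<and> - min (Inf (range u0)) u1 < - u t (- x)"
        hence "f (u t (- x)) - u t (- x) > 0" using below by simp
        moreover have "rho t (- x) \<ge> 0" using rho_nonneg h by blast
        ultimately have "ut t (- x) + u t (- x) * ux t (- x) \<ge> 0" using eq h by simp
        thus "- ut t (- x) + - u t (- x) * ux t (- x) \<le> 0" by simp
      qed
    qed
    thus ?thesis by simp
  qed
  have part1: "\<forall>t x. 0 \<le> t \<and> t < T \<longrightarrow>
            min (Inf (range u0)) (Min {v. f v = v}) \<le> u t x \<and>
            u t x \<le> max (Sup (range u0)) (Max {v. f v = v})"
    using up lo unfolding uN_def u1_def \<Sigma>_def by blast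
  have part2: "\<forall>us. {v. f v = v} = {us} \<and> deriv f us < 1 \<longrightarrow>
           (\<forall>t x. 0 \<le> t \<and> t < T \<longrightarrow>
              min (Inf (range u0)) us \<le> u t x \<and> u t x \<le> max (Sup (range u0)) us)"
  proof (intro allI impI)
    fix us t x assume h: "{v. f v = v} = {us} \<and> deriv f us < 1" and t: "0 \<le> t \<and> t < T"
    have "Min {v. f v = v} = us" "Max {v. f v = v} = us" using h by simp_all
    thus "min (Inf (range u0)) us \<le> u t x \<and> u t x \<le> max (Sup (range u0)) us"
      using part1 t by metis
  qed
  show ?thesis using part1 part2 by (rule conjI)
qed

end
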